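(* Let $g(x)=\sum_{n\ge 1}\frac{2\,(4n+1)!}{(n+1)!\,(3n+2)!}\,x^n$, regarded as a formal power series. For all integers $n\ge 1$, $$\frac{[x^n]\,(g(x))^2}{[x^n]\,g(x)}=\frac{10(n-1)(n^2+14n+12)}{3(3n+5)(3n+4)(n+2)}.$$
   Context: For a formal power series $f(x)$, $[x^n]f(x)$ denotes the coefficient of $x^n$ in $f(x)$. *)

theory Defs
  imports "HOL-Computational_Algebra.Formal_Power_Series"
begin

definition g_fps :: "rat fps" where
  "g_fps = Abs_fps (\<lambda>n. if n = 0 then 0
     else 2 * fact (4*n+1) / (fact (n+1) * fact (3*n+2)))"

end

theory Submission
  imports Defs
begin
definition A0 :: "rat \<Rightarrow> rat" where "A0 n = 1024*(n+1)*(2*n+3)*(2*n+5)*(4*n+5)*(4*n+7)*(6*n+17)"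
definition A1 :: "rat \<Rightarrow> rat" where "A1 n = -13460160 - 35352264*n - 38357160*n^2 - 22000992*n^3 - 7034976*n^4 - 1188864*n^5 - 82944*n^6"
definition A2 :: "rat \<Rightarrow> rat" where "A2 n = 9*(n+4)*(3*n+7)*(3*n+8)*(3*n+10)*(3*n+11)*(6*n+11)"
definition NN :: "rat \<Rightarrow> rat \<Rightarrow> rat" where "NN x y = 14817600 + 48527640*y + 67488540*y^2 + 51679320*y^3 + 23538900*y^4 + 6378960*y^5 + 952560*y^6 + 60480*y^7 + 103460112*x + 327443076*x*y + 440093060*x*y^2 + 325702630*x*y^3 + 143383358*x*y^4 + 37556064*x*y^5 + 5420520*x*y^6 + 332640*x*y^7 + 266685972*x^2 + 798091400*x^2*y + 1011827025*x^2*y^2 + 704489535*x^2*y^3 + 290898668*x^2*y^4 + 71223180*x^2*y^5 + 9570960*x^2*y^6 + 544320*x^2*y^7 + 337007328*x^3 + 925954706*x^3*y + 1068254897*x^3*y^2 + 669263864*x^3*y^3 + 245046450*x^3*y^4 + 52148880*x^3*y^5 + 5919480*x^3*y^6 + 272160*x^3*y^7 + 232835295*x^4 + 565384345*x^4*y + 563912365*x^4*y^2 + 295604325*x^4*y^3 + 85843080*x^4*y^4 + 13082580*x^4*y^5 + 816480*x^4*y^6 + 93604413*x^5 + 192522844*x^5*y + 156545115*x^5*y^2 + 62903070*x^5*y^3 + 12488472*x^5*y^4 + 979776*x^5*y^5 + 22759443*x^6 + 37851375*x^6*y + 23358150*x^6*y^2 + 6337440*x^6*y^3 + 637632*x^6*y^4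 + 3224907*x^7 + 4109634*x^7*y + 1731888*x^7*y^2 + 241056*x^7*y^3 + 198450*x^8 + 175500*x^8*y + 38880*x^8*y^2"
definition nm :: "rat \<Rightarrow> rat" where "nm y = (4*y+2)*(4*y+3)*(4*y+4)*(4*y+5)"
definition dn :: "rat \<Rightarrow> rat" where "dn y = (y+2)*(3*y+3)*(3*y+4)*(3*y+5)"

lemma dn_pos: "y \<ge> 0 \<Longrightarrow> dn y > 0" unfolding dn_def by (intro mult_pos_pos) auto

lemma gen1: "b \<noteq> 0 \<Longrightarrow> d \<noteq> 0 \<Longrightarrow> K \<noteq> 0 \<Longrightarrow>
  (A + B*(a/b) + C*(a/b)*(c/d)::rat) = K*(A*b*d + B*a*d + C*a*c)/(K*b*d)"
  by (simp add: field_simps)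
lemma gen2: "q \<noteq> 0 \<Longrightarrow> s \<noteq> 0 \<Longrightarrow> t \<noteq> 0 \<Longrightarrow> E \<noteq> 0 \<Longrightarrow> f \<noteq> 0 \<Longrightarrow>
  18*(p/q)*((f*h)/s)*(N::rat)/(E*f) = 18*p*h*t*N/(E*q*s*t)"
  by (simp add: field_simps)
lemma gen3: "q \<noteq> 0 \<Longrightarrow> s \<noteq> 0 \<Longrightarrow> t \<noteq> 0 \<Longrightarrow> E \<noteq> 0 \<Longrightarrow> f \<noteq> 0 \<Longrightarrow>
  18*(r/s)*((f*h)/t)*(N::rat)/(E*f) = 18*q*r*h*N/(E*q*s*t)"
  by (simp add: field_simps)

lemma key:
  fixes x y :: rat assumes x: "x \<ge> 0" and y: "y \<ge> 0"
  shows "A0 (x+y) + A1 (x+y) * (nm y/dn y) + A2 (x+y)*(nm y/dn y)*(nm(y+1)/dn(y+1)) =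
    18*(nm x/dn x)*(nm y/dn y)*NN (x+1) (y-1)/((x+y+2)*(x+y+3)*(4*(y-1)+6)*(4*(y-1)+7)*(4*(y-1)+9))
  - 18*(nm y/dn y)*(nm(y+1)/dn(y+1))*NN x y/((x+y+2)*(x+y+3)*(4*y+6)*(4*y+7)*(4*y+9))"
proof -
  have d1: "dn x > 0" "dn y > 0" "dn (y+1) > 0" using x y by (auto intro: dn_pos)
  have d2: "x+y+2 > 0" "x+y+3 > 0" "4*y+2>0" "4*y+3>0" "4*y+5>0" "4*y+6>0" "4*y+7>0" "4*y+9>0" using x y by auto
  have e1: "4*(y-1)+6 = 4*y+2" "4*(y-1)+7 = 4*y+3" "4*(y-1)+9 = 4*y+5" by algebra+
  have n1: "nm y = (4*y+2)*(4*y+3)*(4*y+5)*(4*y+4)" "nm (y+1) = (4*y+6)*(4*y+7)*(4*y+9)*(4*y+8)"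
    unfolding nm_def by algebra+
  have P: "(x+y+2)*(x+y+3)*dn x*(A0 (x+y)*dn y*dn (y+1)+A1 (x+y)*nm y*dn (y+1)+A2 (x+y)*nm y*nm (y+1))
  = 18*nm x*(4*y+4)*dn (y+1)*NN (x+1) (y-1) - 18*dn x*nm y*(4*y+8)*NN x y"
  unfolding A0_def A1_def A2_def NN_def nm_def dn_def by algebra
  have D: "(x+y+2)*(x+y+3)*dn x*dn y*dn(y+1) \<noteq> 0" using d1 d2 by auto
  have L: "A0 (x+y) + A1 (x+y) * (nm y/dn y) + A2 (x+y)*(nm y/dn y)*(nm(y+1)/dn(y+1)) =
     (x+y+2)*(x+y+3)*dn x*(A0 (x+y)*dn y*dn (y+1)+A1 (x+y)*nm y*dn (y+1)+A2 (x+y)*nm y*nm (y+1)) / ((x+y+2)*(x+y+3)*dn x*dn y*dn(y+1))"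
    apply (subst gen1[where K="(x+y+2)*(x+y+3)*dn x"]) using d1 d2 by (auto simp: mult.assoc)
  have R1: "18*(nm x/dn x)*(nm y/dn y)*NN (x+1) (y-1)/((x+y+2)*(x+y+3)*(4*y+2)*(4*y+3)*(4*y+5))
     = 18*nm x*(4*y+4)*dn (y+1)*NN (x+1) (y-1) / ((x+y+2)*(x+y+3)*dn x*dn y*dn(y+1))"
    unfolding n1(1) using gen2[of "dn x" "dn y" "dn (y+1)" "(x+y+2)*(x+y+3)" "(4*y+2)*(4*y+3)*(4*y+5)" "nm x" "4*y+4" "NN (x+1) (y-1)"] d1 d2
    by (simp add: mult.assoc)
  have R2: "18*(nm y/dn y)*(nm(y+1)/dn(y+1))*NN x y/((x+y+2)*(x+y+3)*(4*y+6)*(4*y+7)*(4*y+9))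
     = 18*dn x*nm y*(4*y+8)*NN x y / ((x+y+2)*(x+y+3)*dn x*dn y*dn(y+1))"
    unfolding n1(2) using gen3[of "dn x" "dn y" "dn (y+1)" "(x+y+2)*(x+y+3)" "(4*y+6)*(4*y+7)*(4*y+9)" "nm y" "4*y+8" "NN x y"] d1 d2
    by (simp add: mult.assoc)
  show ?thesis unfolding e1 L R1 R2 P by (simp add: diff_divide_distrib)
qed


definition cc :: "nat \<Rightarrow> rat" where "cc k = 2 * fact (4*k+1) / (fact (k+1) * fact (3*k+2))"

lemma cc_Suc: "cc (Suc k) = cc k * nm (of_nat k) / dn (of_nat k)"
proof -
  have e1: "4*Suc k+1 = Suc (Suc (Suc (Suc (4*k+1))))" "Suc k + 1 = Suc (k+1)"
     "3*Suc k+2 = Suc (Suc (Suc (3*k+2)))" by simp_all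
  have p: "dn (of_nat k) > 0" by (rule dn_pos) simp
  show ?thesis unfolding cc_def e1 fact_Suc nm_def using p unfolding dn_def
    by (simp add: field_simps)
qed

lemma cc_pos: "cc k > 0" unfolding cc_def by simp

lemma cc0: "cc 0 = 1" unfolding cc_def by (simp add: fact_numeral)
lemma cc1: "cc 1 = 1" using cc_Suc[of 0] by (simp add: cc0 nm_def dn_def)
lemma cc1s: "cc (Suc 0) = 1" using cc1 by simp

definition GG :: "nat \<Rightarrow> nat \<Rightarrow> rat" where
  "GG n k = 18 * cc k * cc (Suc (Suc n) - k) * NN (of_nat k) (of_nat n - of_nat k) /
    ((of_nat n+2)*(of_nat n+3)*(4*(of_nat n - of_nat k)+6)*(4*(of_nat n - of_nat k)+7)*(4*(of_nat n - of_nat k)+9))"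

lemma perk:
  assumes "k \<le> n"
  shows "A0 (of_nat n) * (cc k * cc (n-k)) + A1 (of_nat n) * (cc k * cc (Suc n - k))
     + A2 (of_nat n) * (cc k * cc (Suc (Suc n) - k)) = GG n (Suc k) - GG n k"
proof -
  obtain m where n: "n = k + m" using assms le_Suc_ex by blast
  define x :: rat where "x = of_nat k"
  define y :: rat where "y = of_nat m"
  have x: "x \<ge> 0" and y: "y \<ge> 0" unfolding x_def y_def by simp_all
  have e: "n - k = m" "Suc n - k = Suc m" "Suc (Suc n) - k = Suc (Suc m)" "Suc (Suc n) - Suc k = Suc m"
    using n by simp_all
  have o: "(of_nat n::rat) = x + y" "(of_nat n::rat) - of_nat k = y" "(of_nat n::rat) - of_nat (Suc k) = y - 1"
     "(of_nat (Suc k)::rat) = x + 1"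
    unfolding n x_def y_def by simp_all
  have c: "cc (Suc m) = cc m * (nm y / dn y)" "cc (Suc (Suc m)) = cc m * (nm y / dn y) * (nm (y+1) / dn (y+1))"
     "cc (Suc k) = cc k * (nm x / dn x)"
    unfolding y_def x_def by (simp_all add: cc_Suc add.commute)
  have K: "A0 (x+y) + A1 (x+y) * (nm y/dn y) + A2 (x+y)*(nm y/dn y)*(nm(y+1)/dn(y+1)) =
    18*(nm x/dn x)*(nm y/dn y)*NN (x+1) (y-1)/((x+y+2)*(x+y+3)*(4*(y-1)+6)*(4*(y-1)+7)*(4*(y-1)+9))
  - 18*(nm y/dn y)*(nm(y+1)/dn(y+1))*NN x y/((x+y+2)*(x+y+3)*(4*y+6)*(4*y+7)*(4*y+9))"
    by (rule key[OF x y])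
  have "GG n (Suc k) - GG n k = (cc k * cc m) * (18*(nm x/dn x)*(nm y/dn y)*NN (x+1) (y-1)/((x+y+2)*(x+y+3)*(4*(y-1)+6)*(4*(y-1)+7)*(4*(y-1)+9))
  - 18*(nm y/dn y)*(nm(y+1)/dn(y+1))*NN x y/((x+y+2)*(x+y+3)*(4*y+6)*(4*y+7)*(4*y+9)))"
    unfolding GG_def e o c by (simp add: x_def[symmetric] algebra_simps)
  also have "\<dots> = (cc k * cc m) * (A0 (x+y) + A1 (x+y) * (nm y/dn y) + A2 (x+y)*(nm y/dn y)*(nm(y+1)/dn(y+1)))"
    using K by simp
  also have "\<dots> = A0 (of_nat n) * (cc k * cc (n-k)) + A1 (of_nat n) * (cc k * cc (Suc n - k))
     + A2 (of_nat n) * (cc k * cc (Suc (Suc n) - k))"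
    unfolding e o c by (simp add: algebra_simps)
  finally show ?thesis by simp
qed


definition hr :: "rat \<Rightarrow> rat" where "hr z = 8*(2*z+1)*(4*z+3)*(z+5)/(3*(3*z+5)*(3*z+4)*(z+2))"

lemma tiny: "5*((X::rat)+Y+W) = 3*A - 90*B + 5*C + 5*E \<Longrightarrow> X+Y+W = (3/5)*A - 18*B + C + E"
  by (simp add: field_simps)

lemma genH:
  fixes a0 a1 a2 n0 d0 n1 d1 p0 q0 p1 q1 p2 q2 N1 N2 e f :: rat
  assumes "d0\<noteq>0" "d1\<noteq>0" "q0\<noteq>0" "q1\<noteq>0" "q2\<noteq>0" "e\<noteq>0" "f\<noteq>0"
  and P5: "5*(a0*p0*d0*d1*q1*q2*e*f + a1*n0*p1*d1*q0*q2*e*f + a2*n0*n1*p2*q0*q1*e*f)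
     = 3*(n0*N1*d1*q0*q1*q2*f) - 90*(n0*n1*N2*q0*q1*q2) + 5*(a1*n0*d1*q0*q1*q2*e*f) + 5*(a2*(n0*d1+n0*n1)*q0*q1*q2*e*f)"
  shows "a0*(p0/q0) + a1*(n0/d0)*(p1/q1) + a2*(n0/d0)*(n1/d1)*(p2/q2)
     = 18*(n0/d0)*N1/(e*2*3*5) - 18*(n0/d0)*(n1/d1)*N2/(e*f) + a1*(n0/d0) + a2*((n0/d0)+(n0/d0)*(n1/d1))"
proof -
  let ?D = "d0*d1*q0*q1*q2*e*f"
  have D: "?D \<noteq> 0" using assms by simp
  have P: "a0*p0*d0*d1*q1*q2*e*f + a1*n0*p1*d1*q0*q2*e*f + a2*n0*n1*p2*q0*q1*e*f
     = (3/5)*(n0*N1*d1*q0*q1*q2*f) - 18*(n0*n1*N2*q0*q1*q2) + a1*n0*d1*q0*q1*q2*e*f + a2*(n0*d1+n0*n1)*q0*q1*q2*e*f"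
    by (rule tiny[OF P5])
  have l: "(a0*(p0/q0) + a1*(n0/d0)*(p1/q1) + a2*(n0/d0)*(n1/d1)*(p2/q2)) * ?D = a0*p0*d0*d1*q1*q2*e*f + a1*n0*p1*d1*q0*q2*e*f + a2*n0*n1*p2*q0*q1*e*f"
    using assms by (simp add: field_simps)
  have r: "(18*(n0/d0)*N1/(e*2*3*5) - 18*(n0/d0)*(n1/d1)*N2/(e*f) + a1*(n0/d0) + a2*((n0/d0)+(n0/d0)*(n1/d1))) * ?D
     = (3/5)*(n0*N1*d1*q0*q1*q2*f) - 18*(n0*n1*N2*q0*q1*q2) + a1*n0*d1*q0*q1*q2*e*f + a2*(n0*d1+n0*n1)*q0*q1*q2*e*f"
    using assms by (simp add: field_simps)
  show ?thesis using l r P D by (metis mult_right_cancel)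
qed

lemma key2:
  fixes z :: rat assumes z: "z \<ge> 0"
  shows "A0 z * hr z + A1 z * (nm z/dn z) * hr (z+1) + A2 z * (nm z/dn z) * (nm (z+1)/dn (z+1)) * hr (z+2)
    = 18*(nm z/dn z)*NN (z+1) (-1)/((z+2)*(z+3)*2*3*5) - 18*(nm z/dn z)*(nm (z+1)/dn (z+1))*NN 0 z/((z+2)*(z+3)*((4*z+6)*(4*z+7)*(4*z+9)))
      + A1 z * (nm z/dn z) + A2 z * ((nm z/dn z) + (nm z/dn z)*(nm (z+1)/dn (z+1)))"
proof -
  define hn :: "rat \<Rightarrow> rat" where "hn z = 8*(2*z+1)*(4*z+3)*(z+5)" for z
  define hd :: "rat \<Rightarrow> rat" where "hd z = 3*(3*z+5)*(3*z+4)*(z+2)" for z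
  have h: "hr w = hn w / hd w" for w unfolding hr_def hn_def hd_def by simp
  have hdp: "w \<ge> 0 \<Longrightarrow> hd w > 0" for w unfolding hd_def by (intro mult_pos_pos) auto
  have q: "hd z \<noteq> 0" "hd (z+1) \<noteq> 0" "hd (z+2) \<noteq> 0" "dn z \<noteq> 0" "dn (z+1) \<noteq> 0"
     "(z+2)*(z+3) \<noteq> 0" "(4*z+6)*(4*z+7)*(4*z+9) \<noteq> 0"
    using z dn_pos[of z] dn_pos[of "z+1"] hdp[of z] hdp[of "z+1"] hdp[of "z+2"] by auto
  have n1: "NN (z+1) (-1) = 33499200 + 124997920*z + 201694340*z^2 + 184259880*z^3 + 104535445*z^4 + 37821455*z^5 + 8540385*z^6 + 1100745*z^7 + 61830*z^8" unfolding NN_def by simp algebra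
  have n2: "NN 0 z = 14817600 + 48527640*z + 67488540*z^2 + 51679320*z^3 + 23538900*z^4 + 6378960*z^5 + 952560*z^6 + 60480*z^7" unfolding NN_def by simp
  have P: "5*(A0 z*hn z*dn z*dn (z+1)*hd (z+1)*hd (z+2)*((z+2)*(z+3))*((4*z+6)*(4*z+7)*(4*z+9))
     + A1 z*nm z*hn (z+1)*dn (z+1)*hd z*hd (z+2)*((z+2)*(z+3))*((4*z+6)*(4*z+7)*(4*z+9))
     + A2 z*nm z*nm (z+1)*hn (z+2)*hd z*hd (z+1)*((z+2)*(z+3))*((4*z+6)*(4*z+7)*(4*z+9)))
     = 3*(nm z*NN (z+1) (-1)*dn (z+1)*hd z*hd (z+1)*hd (z+2)*((4*z+6)*(4*z+7)*(4*z+9)))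
       - 90*(nm z*nm (z+1)*NN 0 z*hd z*hd (z+1)*hd (z+2))
       + 5*(A1 z*nm z*dn (z+1)*hd z*hd (z+1)*hd (z+2)*((z+2)*(z+3))*((4*z+6)*(4*z+7)*(4*z+9)))
       + 5*(A2 z*(nm z*dn (z+1)+nm z*nm (z+1))*hd z*hd (z+1)*hd (z+2)*((z+2)*(z+3))*((4*z+6)*(4*z+7)*(4*z+9)))"
    unfolding n1 n2 hn_def hd_def A0_def A1_def A2_def nm_def dn_def by algebra
  show ?thesis unfolding h
    by (rule genH[OF q(4,5,1,2,3,6,7) P])
qed


definition Full :: "nat \<Rightarrow> rat" where "Full n = (\<Sum>i=0..n. cc i * cc (n-i))"
definition HH :: "nat \<Rightarrow> rat" where "HH n = cc n * hr (of_nat n)"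

lemma rec_full: "A0 (of_nat n) * Full n + A1 (of_nat n) * Full (Suc n) + A2 (of_nat n) * Full (Suc (Suc n))
  = GG n (Suc n) - GG n 0 + A1 (of_nat n) * cc (Suc n) * cc 0 + A2 (of_nat n) * (cc (Suc n) * cc 1 + cc (Suc (Suc n)) * cc 0)"
proof -
  have s: "(\<Sum>k=0..n. A0 (of_nat n) * (cc k * cc (n-k)) + A1 (of_nat n) * (cc k * cc (Suc n - k))
     + A2 (of_nat n) * (cc k * cc (Suc (Suc n) - k))) = GG n (Suc n) - GG n 0"
    using perk sum_Suc_diff[of 0 n "GG n"] by simp
  have F1: "Full (Suc n) = (\<Sum>k=0..n. cc k * cc (Suc n - k)) + cc (Suc n) * cc 0"
    unfolding Full_def by simp
  have F2: "Full (Suc (Suc n)) = (\<Sum>k=0..n. cc k * cc (Suc (Suc n) - k)) + cc (Suc n) * cc 1 + cc (Suc (Suc n)) * cc 0"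
    unfolding Full_def by (simp add: Suc_diff_le)
  show ?thesis unfolding F1 F2 using s
    by (simp add: Full_def sum.distrib sum_distrib_left algebra_simps)
qed

lemma GG_top: "GG n (Suc n) = 18 * cc (Suc n) * cc 1 * NN (of_nat n+1) (-1) / ((of_nat n+2)*(of_nat n+3)*2*3*5)"
  unfolding GG_def by (simp add: add.commute)

lemma GG_bot: "GG n 0 = 18 * cc 0 * cc (Suc (Suc n)) * NN 0 (of_nat n) / ((of_nat n+2)*(of_nat n+3)*((4*of_nat n+6)*(4*of_nat n+7)*(4*of_nat n+9)))"
  unfolding GG_def by (simp add: mult.assoc)

lemma rec_H: "A0 (of_nat n) * HH n + A1 (of_nat n) * HH (Suc n) + A2 (of_nat n) * HH (Suc (Suc n))
  = GG n (Suc n) - GG n 0 + A1 (of_nat n) * cc (Suc n) * cc 0 + A2 (of_nat n) * (cc (Suc n) * cc 1 + cc (Suc (Suc n)) * cc 0)"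
proof -
  define z :: rat where "z = of_nat n"
  have z: "z \<ge> 0" unfolding z_def by simp
  have c: "cc (Suc n) = cc n * (nm z/dn z)" "cc (Suc (Suc n)) = cc n * (nm z/dn z) * (nm (z+1)/dn (z+1))"
    unfolding z_def by (simp_all add: cc_Suc add.commute)
  have o: "(of_nat (Suc n)::rat) = z+1" "(of_nat (Suc (Suc n))::rat) = z+2" unfolding z_def by simp_all
  have "A0 (of_nat n) * HH n + A1 (of_nat n) * HH (Suc n) + A2 (of_nat n) * HH (Suc (Suc n))
     = cc n * (A0 z * hr z + A1 z * (nm z/dn z) * hr (z+1) + A2 z * (nm z/dn z) * (nm (z+1)/dn (z+1)) * hr (z+2))"
    unfolding HH_def o c z_def[symmetric] by (simp add: algebra_simps)
  also have "\<dots> = cc n * (18*(nm z/dn z)*NN (z+1) (-1)/((z+2)*(z+3)*2*3*5) - 18*(nm z/dn z)*(nm (z+1)/dn (z+1))*NN 0 z/((z+2)*(z+3)*((4*z+6)*(4*z+7)*(4*z+9)))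
      + A1 z * (nm z/dn z) + A2 z * ((nm z/dn z) + (nm z/dn z)*(nm (z+1)/dn (z+1))))"
    using key2[OF z] by simp
  also have "\<dots> = GG n (Suc n) - GG n 0 + A1 (of_nat n) * cc (Suc n) * cc 0 + A2 (of_nat n) * (cc (Suc n) * cc 1 + cc (Suc (Suc n)) * cc 0)"
    unfolding GG_top GG_bot c z_def[symmetric] cc0 cc1 by (simp add: algebra_simps)
  finally show ?thesis .
qed

lemma A2_pos: "z \<ge> 0 \<Longrightarrow> A2 z > 0" unfolding A2_def by (intro mult_pos_pos) auto

lemma Full_HH: "Full n = HH n \<and> Full (Suc n) = HH (Suc n)"
proof (induction n)
  case 0
  have "Full 0 = 1" unfolding Full_def by (simp add: cc0)
  moreover have "HH 0 = 1" unfolding HH_def by (simp add: cc0 hr_def)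
  moreover have "Full 1 = 2" unfolding Full_def by (simp add: cc0 cc1 cc1s)
  moreover have "HH 1 = 2" unfolding HH_def by (simp add: cc1 cc1s hr_def)
  ultimately show ?case by simp
next
  case (Suc n)
  have "A2 (of_nat n) * Full (Suc (Suc n)) = A2 (of_nat n) * HH (Suc (Suc n))"
  proof -
    have E: "A0 (of_nat n) * Full n + A1 (of_nat n) * Full (Suc n) + A2 (of_nat n) * Full (Suc (Suc n))
      = A0 (of_nat n) * HH n + A1 (of_nat n) * HH (Suc n) + A2 (of_nat n) * HH (Suc (Suc n))"
      using rec_full[of n] rec_H[of n] by argo
    then show ?thesis using Suc.IH by simp
  qed
  then have "Full (Suc (Suc n)) = HH (Suc (Suc n))" using A2_pos[of "of_nat n"] by simp
  then show ?case using Suc.IH by simp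
qed


lemma g_eq: "g_fps = Abs_fps cc - 1"
proof (rule fps_ext)
  fix n show "fps_nth g_fps n = fps_nth (Abs_fps cc - 1) n"
    by (cases "n = 0") (simp_all add: g_fps_def cc_def)
qed

lemma g_nth: "n \<ge> 1 \<Longrightarrow> fps_nth g_fps n = cc n"
  unfolding g_eq by simp

lemma g2_nth: "n \<ge> 1 \<Longrightarrow> fps_nth (g_fps ^ 2) n = Full n - 2 * cc n"
proof -
  assume n: "n \<ge> 1"
  have e: "g_fps ^ 2 = Abs_fps cc * Abs_fps cc - Abs_fps cc - Abs_fps cc + 1"
    unfolding g_eq by (simp add: power2_eq_square algebra_simps)
  have "fps_nth (g_fps ^ 2) n = fps_nth (Abs_fps cc * Abs_fps cc) n - cc n - cc n + fps_nth 1 n"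
    unfolding e fps_add_nth fps_sub_nth by simp
  then show ?thesis using n by (simp add: fps_mult_nth Full_def)
qed

lemma hr_final: "n \<ge> 1 \<Longrightarrow> hr (of_nat n) - 2 =
    (10 * (of_nat n - 1) * (of_nat n ^ 2 + 14 * of_nat n + 12)) /
    (3 * (3 * of_nat n + 5) * (3 * of_nat n + 4) * (of_nat n + 2) :: rat)"
proof -
  define z :: rat where "z = of_nat n"
  have p: "3*z+5 \<noteq> 0" "3*z+4 \<noteq> 0" "z+2 \<noteq> 0" unfolding z_def by (simp_all add: add_pos_nonneg)
  have gen: "B \<noteq> 0 \<Longrightarrow> (A::rat)/B - 2 = (A - 2*B)/B" for A B by (simp add: field_simps)
  have B: "3*(3*z+5)*(3*z+4)*(z+2) \<noteq> 0" using p by simp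
  have "hr z - 2 = 10 * (z - 1) * (z ^ 2 + 14 * z + 12) / (3 * (3 * z + 5) * (3 * z + 4) * (z + 2))"
    unfolding hr_def gen[OF B] by (rule arg_cong[where f="\<lambda>t. t / _"]) algebra
  then show ?thesis unfolding z_def .
qed

theorem mainTheorem2:
  fixes n :: nat
  assumes "n \<ge> 1"
  shows "fps_nth (g_fps ^ 2) n / fps_nth g_fps n =
    (10 * (of_nat n - 1) * (of_nat n ^ 2 + 14 * of_nat n + 12)) /
    (3 * (3 * of_nat n + 5) * (3 * of_nat n + 4) * (of_nat n + 2) :: rat)"
proof -
  have c: "cc n \<noteq> 0" using cc_pos[of n] by simp
  have "fps_nth (g_fps ^ 2) n / fps_nth g_fps n = (cc n * hr (of_nat n) - 2 * cc n) / cc n"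
    using assms g_nth g2_nth Full_HH[of n] unfolding HH_def by simp
  also have "\<dots> = hr (of_nat n) - 2" using c by (simp add: field_simps)
  finally show ?thesis using hr_final[OF assms] by simp
qed

end
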